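(* Let $\{P^{[s,t]}_{ij,k}\}$, with initial point $x^{(0)}\in S$, be a discrete time quadratic stochastic process of type (A) or of type (B). For integers $0\le m<n$ and $i,j\in\mathbb{N}$ define $\mathbb{H}^{m,n}_{ij}=\sum_{l=1}^\infty P^{[m,n]}_{il,j}x^{(m)}_l$. Then each $(\mathbb{H}^{m,n}_{ij})_{i,j}$ is a stochastic matrix and the family $\{\mathbb{H}^{m,n}_{ij}\}$ is a Markov process, i.e. $\mathbb{H}^{m,l}_{ij}=\sum_{k=1}^\infty \mathbb{H}^{m,n}_{ik}\mathbb{H}^{n,l}_{kj}$ for all $m<n<l$ and all $i,j\in\mathbb{N}$.
   Context: $\mathbb{N}=\{1,2,\dots\}$; times are nonnegative integers. $\ell^1$ is the space of real sequences $x=(x_n)_{n\in\mathbb{N}}$ with $\|x\|_1=\sum_n|x_n|<\infty$, and $S=\{x\in\ell^1:x_n\ge0,\ \|x\|_1=1\}$. A discrete time quadratic stochastic process (q.s.p.) consists of an initial point $x^{(0)}=(x^{(0)}_n)\in S$ and numbers $P^{[s,t]}_{ij,k}$ ($i,j,k\in\mathbb{N}$; $s,t$ nonnegative integers with $t-s\ge1$) such that for all $s,t$: (1) $P^{[s,t]}_{ij,k}=P^{[s,t]}_{ji,k}$; (2) $P^{[s,t]}_{ij,k}\ge0$ and $\sum_{k=1}^\infty P^{[s,t]}_{ij,k}=1$; and (3) one of the following holds for all $s<r<t$ and all $i,j,k$: type (A): $P^{[s,t]}_{ij,k}=\sum_{m,l=1}^\infty P^{[s,r]}_{ij,m}P^{[r,t]}_{ml,k}x^{(r)}_l$;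 type (B): $P^{[s,t]}_{ij,k}=\sum_{m,l,g,h=1}^\infty P^{[s,r]}_{im,l}P^{[s,r]}_{jg,h}P^{[r,t]}_{lh,k}x^{(s)}_m x^{(s)}_g$. Here for $r\ge1$, $x^{(r)}_k=\sum_{i,j=1}^\infty P^{[0,r]}_{ij,k}x^{(0)}_ix^{(0)}_j$. A matrix is stochastic if its entries are nonnegative and each row sums to 1. *)

theory Defs
  imports "HOL-Analysis.Analysis"
begin

text \<open>Indices range over the positive naturals {1..}; times are nat.
  A process is encoded as P s t i j k  (for P^{[s,t]}_{ij,k}) and an initial point x0.\<close>

definition simplex_S :: "(nat \<Rightarrow> real) \<Rightarrow> bool" where
  "simplex_S x \<longleftrightarrow> (\<forall>n\<ge>1. x n \<ge> 0) \<and> x summable_on {1..} \<and> (\<Sum>\<^sub>\<infinity>n\<in>{1..}. x n) = 1"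

definition qsp_state :: "(nat \<Rightarrow> nat \<Rightarrow> nat \<Rightarrow> nat \<Rightarrow> nat \<Rightarrow> real) \<Rightarrow> (nat \<Rightarrow> real) \<Rightarrow> nat \<Rightarrow> nat \<Rightarrow> real" where
  "qsp_state P x0 r k = (if r = 0 then x0 k
     else (\<Sum>\<^sub>\<infinity>(i,j)\<in>{1..}\<times>{1..}. P 0 r i j k * x0 i * x0 j))"

definition qsp_basic :: "(nat \<Rightarrow> nat \<Rightarrow> nat \<Rightarrow> nat \<Rightarrow> nat \<Rightarrow> real) \<Rightarrow> (nat \<Rightarrow> real) \<Rightarrow> bool" where
  "qsp_basic P x0 \<longleftrightarrow> simplex_S x0
    \<and> (\<forall>s t i j k. s < t \<and> i \<ge> 1 \<and> j \<ge> 1 \<and> k \<ge> 1 \<longrightarrow> P s t i j k = P s t j i k)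
    \<and> (\<forall>s t i j. s < t \<and> i \<ge> 1 \<and> j \<ge> 1 \<longrightarrow>
         (\<forall>k\<ge>1. P s t i j k \<ge> 0) \<and> (\<lambda>k. P s t i j k) summable_on {1..}
         \<and> (\<Sum>\<^sub>\<infinity>k\<in>{1..}. P s t i j k) = 1)"

definition qsp_typeA :: "(nat \<Rightarrow> nat \<Rightarrow> nat \<Rightarrow> nat \<Rightarrow> nat \<Rightarrow> real) \<Rightarrow> (nat \<Rightarrow> real) \<Rightarrow> bool" where
  "qsp_typeA P x0 \<longleftrightarrow> qsp_basic P x0 \<and>
    (\<forall>s r t i j k. s < r \<and> r < t \<and> i \<ge> 1 \<and> j \<ge> 1 \<and> k \<ge> 1 \<longrightarrow>
       P s t i j k = (\<Sum>\<^sub>\<infinity>(m,l)\<in>{1..}\<times>{1..}. P s r i j m * P r t m l k * qsp_state P x0 r l))"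

definition qsp_typeB :: "(nat \<Rightarrow> nat \<Rightarrow> nat \<Rightarrow> nat \<Rightarrow> nat \<Rightarrow> real) \<Rightarrow> (nat \<Rightarrow> real) \<Rightarrow> bool" where
  "qsp_typeB P x0 \<longleftrightarrow> qsp_basic P x0 \<and>
    (\<forall>s r t i j k. s < r \<and> r < t \<and> i \<ge> 1 \<and> j \<ge> 1 \<and> k \<ge> 1 \<longrightarrow>
       P s t i j k = (\<Sum>\<^sub>\<infinity>((m,l),(g,h))\<in>({1..}\<times>{1..})\<times>({1..}\<times>{1..}).
          P s r i m l * P s r j g h * P r t l h k * qsp_state P x0 s m * qsp_state P x0 s g))"

definition qsp_H :: "(nat \<Rightarrow> nat \<Rightarrow> nat \<Rightarrow> nat \<Rightarrow> nat \<Rightarrow> real) \<Rightarrow> (nat \<Rightarrow> real) \<Rightarrow> nat \<Rightarrow> nat \<Rightarrow> nat \<Rightarrow> nat \<Rightarrow> real" where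
  "qsp_H P x0 m n i j = (\<Sum>\<^sub>\<infinity>l\<in>{1..}. P m n i l j * qsp_state P x0 m l)"

definition stochastic_matrix :: "(nat \<Rightarrow> nat \<Rightarrow> real) \<Rightarrow> bool" where
  "stochastic_matrix A \<longleftrightarrow> (\<forall>i\<ge>1. \<forall>j\<ge>1. A i j \<ge> 0)
     \<and> (\<forall>i\<ge>1. (\<lambda>j. A i j) summable_on {1..} \<and> (\<Sum>\<^sub>\<infinity>j\<in>{1..}. A i j) = 1)"

end

theory Submission
  imports Defs
begin

lemma hs_sm: "(f has_sum s) A \<Longrightarrow> f summable_on A"
  by (auto simp: summable_on_def)

lemma L1:
  fixes f :: "'a \<Rightarrow> 'b \<Rightarrow> real"
  assumes "\<And>a b. a\<in>A \<Longrightarrow> b\<in>B \<Longrightarrow> 0 \<le> f a b"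
    and "\<And>a. a\<in>A \<Longrightarrow> (f a has_sum g a) B" and "(g has_sum s) A"
  shows "((\<lambda>(a,b). f a b) has_sum s) (A\<times>B)"
proof -
  have "(\<lambda>(a,b). f a b) summable_on Sigma A (\<lambda>_. B)"
    by (rule summable_on_SigmaI[where g=g]) (use assms in \<open>auto simp: summable_on_def\<close>)
  then show ?thesis
    by (intro has_sum_SigmaI[where g=g]) (use assms in auto)
qed

lemma L2a:
  fixes f :: "'a \<Rightarrow> 'b \<Rightarrow> real"
  assumes "((\<lambda>(a,b). f a b) has_sum s) (A\<times>B)"
  shows "((\<lambda>a. infsum (f a) B) has_sum s) A"
proof -
  have "f a summable_on B" if "a \<in> A" for a
    using summable_on_SigmaD1[of f A "\<lambda>_. B" a] assms that by (auto simp: summable_on_def)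
  then show ?thesis
    by (intro has_sum_Sigma'[OF assms[unfolded case_prod_unfold]]) auto
qed

lemma L2b:
  fixes f :: "'a \<Rightarrow> 'b \<Rightarrow> real"
  assumes "((\<lambda>(a,b). f a b) has_sum s) (A\<times>B)"
  shows "((\<lambda>b. infsum (\<lambda>a. f a b) A) has_sum s) B"
proof -
  have "((\<lambda>(b,a). f a b) has_sum s) (B\<times>A)"
    using assms has_sum_swap[where f="\<lambda>(a,b). f a b" and S=s and A=A and B=B] by auto
  then show ?thesis by (rule L2a[where f="\<lambda>b a. f a b"])
qed

lemma prod_has_sum:
  fixes g :: "'a \<Rightarrow> real" and h :: "'b \<Rightarrow> real"
  assumes "\<And>a. a\<in>A \<Longrightarrow> 0 \<le> g a" "\<And>b. b\<in>B \<Longrightarrow> 0 \<le> h b"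
    "(g has_sum G) A" "(h has_sum H) B"
  shows "((\<lambda>(a,b). g a * h b) has_sum (G*H)) (A\<times>B)"
  apply (rule L1[where g="\<lambda>a. g a * H"])
  using assms by (auto intro: has_sum_cmult_right has_sum_cmult_left)

lemma le_one_of_has_sum:
  fixes f :: "nat \<Rightarrow> real"
  assumes "(f has_sum 1) A" "\<And>x. x\<in>A \<Longrightarrow> 0 \<le> f x" "k \<in> A"
  shows "f k \<le> 1"
proof -
  have "(f has_sum f k) {k}" by (rule has_sum_finiteI) auto
  then show ?thesis
    by (rule has_sum_mono_neutral[OF _ assms(1)]) (use assms in auto)
qed

lemma basic_P:
  assumes "qsp_basic P x0" "s < t" "i \<ge> 1" "j \<ge> 1"
  shows "((\<lambda>k. P s t i j k) has_sum 1) {1..}" "\<And>k. k \<ge> 1 \<Longrightarrow> 0 \<le> P s t i j k"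
    "\<And>k. k \<ge> 1 \<Longrightarrow> P s t i j k \<le> 1"
proof -
  have a: "(\<lambda>k. P s t i j k) summable_on {1..}" "infsum (\<lambda>k. P s t i j k) {1..} = 1"
    and nn: "\<And>k. k \<ge> 1 \<Longrightarrow> 0 \<le> P s t i j k"
    using assms unfolding qsp_basic_def by auto
  show hs: "((\<lambda>k. P s t i j k) has_sum 1) {1..}" using has_sum_infsum[OF a(1)] a(2) by simp
  show "\<And>k. k \<ge> 1 \<Longrightarrow> 0 \<le> P s t i j k" by (rule nn)
  show "\<And>k. k \<ge> 1 \<Longrightarrow> P s t i j k \<le> 1"
    using le_one_of_has_sum[OF hs] nn by auto
qed

lemma basic_x0:
  assumes "qsp_basic P x0"
  shows "(x0 has_sum 1) {1..}" "\<And>k. k \<ge> 1 \<Longrightarrow> 0 \<le> x0 k"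
proof -
  have a: "x0 summable_on {1..}" "infsum x0 {1..} = 1"
    using assms unfolding qsp_basic_def simplex_S_def by auto
  show "(x0 has_sum 1) {1..}" using has_sum_infsum[OF a(1)] a(2) by simp
  show "\<And>k. k \<ge> 1 \<Longrightarrow> 0 \<le> x0 k"
    using assms unfolding qsp_basic_def simplex_S_def by auto
qed

lemma state_def0: "qsp_state P x0 0 = x0"
  by (auto simp: qsp_state_def)

lemma state_facts:
  assumes "qsp_basic P x0"
  shows "(qsp_state P x0 r has_sum 1) {1..}" "\<And>k. k \<ge> 1 \<Longrightarrow> 0 \<le> qsp_state P x0 r k"
proof -
  have "(qsp_state P x0 r has_sum 1) {1..} \<and> (\<forall>k\<ge>1. 0 \<le> qsp_state P x0 r k)"
  proof (cases "r = 0")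
    case True then show ?thesis using basic_x0[OF assms] by (simp add: state_def0)
  next
    case False
    define f where "f = (\<lambda>(i::nat,j::nat) k. P 0 r i j k * x0 i * x0 j)"
    have xx: "((\<lambda>(i,j). x0 i * x0 j) has_sum 1*1) ({1..}\<times>{1..})"
      by (rule prod_has_sum) (use basic_x0[OF assms] in auto)
    have "((\<lambda>(a,b). f a b) has_sum 1) (({1..}\<times>{1..})\<times>{1..})"
    proof (rule L1[where g="\<lambda>(i,j). x0 i * x0 j"])
      show "((\<lambda>(i,j). x0 i * x0 j) has_sum 1) ({1..}\<times>{1..})" using xx by simp
      fix a :: "nat\<times>nat" and b :: nat assume "a \<in> {1..}\<times>{1..}" "b \<in> {1..}"
      then show "0 \<le> f a b" using basic_P[OF assms] basic_x0[OF assms] False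
        by (auto simp: f_def)
    next
      fix a :: "nat\<times>nat" assume "a \<in> {1..}\<times>{1..}"
      then obtain i j where aij: "a = (i,j)" "i \<ge> 1" "j \<ge> 1" by auto
      have "((\<lambda>k. P 0 r i j k * (x0 i * x0 j)) has_sum 1 * (x0 i * x0 j)) {1..}"
        by (rule has_sum_cmult_left) (rule basic_P(1)[OF assms], use False aij in auto)
      then show "(f a has_sum (case a of (i,j) \<Rightarrow> x0 i * x0 j)) {1..}"
        using aij by (simp add: f_def mult.assoc)
    qed
    from L2b[OF this] have "((\<lambda>k. qsp_state P x0 r k) has_sum 1) {1..}"
      using False by (simp add: f_def qsp_state_def case_prod_unfold)
    moreover have "\<forall>k\<ge>1. 0 \<le> qsp_state P x0 r k"
      using False basic_P[OF assms] basic_x0[OF assms]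
      by (auto simp: qsp_state_def intro!: infsum_nonneg)
    ultimately show ?thesis by simp
  qed
  then show "(qsp_state P x0 r has_sum 1) {1..}" "\<And>k. k \<ge> 1 \<Longrightarrow> 0 \<le> qsp_state P x0 r k"
    by auto
qed

lemma H_has_sum:
  assumes "qsp_basic P x0" "m < n" "i \<ge> 1" "j \<ge> 1"
  shows "((\<lambda>l. P m n i l j * qsp_state P x0 m l) has_sum qsp_H P x0 m n i j) {1..}"
proof -
  have "(\<lambda>l. P m n i l j * qsp_state P x0 m l) summable_on {1..}"
  proof (rule summable_on_comparison_test[where f="qsp_state P x0 m"])
    show "qsp_state P x0 m summable_on {1..}" using state_facts(1)[OF assms(1)] by (auto simp: summable_on_def)
    fix l :: nat show "l \<in> {1..} \<Longrightarrow> P m n i l j * qsp_state P x0 m l \<le> qsp_state P x0 m l"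
      "l \<in> {1..} \<Longrightarrow> 0 \<le> P m n i l j * qsp_state P x0 m l"
    proof -
      assume l: "l \<in> {1..}"
      have "0 \<le> P m n i l j" "P m n i l j \<le> 1" using basic_P[OF assms(1,2,3), of l] l assms by auto
      moreover have "0 \<le> qsp_state P x0 m l" using state_facts(2)[OF assms(1)] l by auto
      ultimately show "P m n i l j * qsp_state P x0 m l \<le> qsp_state P x0 m l"
        "0 \<le> P m n i l j * qsp_state P x0 m l" by (auto intro: mult_left_le_one_le)
    qed
  qed
  then show ?thesis unfolding qsp_H_def by (rule has_sum_infsum)
qed

lemma H_nonneg:
  assumes "qsp_basic P x0" "m < n" "i \<ge> 1" "j \<ge> 1"
  shows "0 \<le> qsp_H P x0 m n i j"
  unfolding qsp_H_def using basic_P[OF assms(1,2,3)] state_facts(2)[OF assms(1)] assms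
  by (auto intro!: infsum_nonneg)

lemma H_row:
  assumes "qsp_basic P x0" "m < n" "i \<ge> 1"
  shows "((\<lambda>j. qsp_H P x0 m n i j) has_sum 1) {1..}"
proof -
  define f where "f = (\<lambda>l j. P m n i l j * qsp_state P x0 m l)"
  have "((\<lambda>(a,b). f a b) has_sum 1) ({1..}\<times>{1..})"
  proof (rule L1[where g="qsp_state P x0 m"])
    show "(qsp_state P x0 m has_sum 1) {1..}" by (rule state_facts(1)[OF assms(1)])
    fix a b :: nat assume "a \<in> {1..}" "b \<in> {1..}"
    then show "0 \<le> f a b" using basic_P[OF assms(1,2,3)] state_facts(2)[OF assms(1)]
      by (auto simp: f_def)
  next
    fix a :: nat assume "a \<in> {1..}"
    then have "((\<lambda>j. P m n i a j * qsp_state P x0 m a) has_sum 1 * qsp_state P x0 m a) {1..}"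
      by (intro has_sum_cmult_left basic_P(1)[OF assms(1,2,3)]) auto
    then show "(f a has_sum qsp_state P x0 m a) {1..}" by (simp add: f_def)
  qed
  from L2b[OF this] show ?thesis by (simp add: f_def qsp_H_def)
qed

lemma stoch:
  assumes "qsp_basic P x0" "m < n"
  shows "stochastic_matrix (qsp_H P x0 m n)"
  unfolding stochastic_matrix_def using H_nonneg[OF assms] H_row[OF assms]
  by (auto simp: summable_on_def infsumI)

lemma markovA:
  assumes A: "qsp_typeA P x0" and "m < n" "n < l" "i \<ge> 1" "j \<ge> 1"
  shows "qsp_H P x0 m l i j = (\<Sum>\<^sub>\<infinity>k\<in>{1..}. qsp_H P x0 m n i k * qsp_H P x0 n l k j)"
proof -
  have B: "qsp_basic P x0" using A by (simp add: qsp_typeA_def)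
  let ?X = "qsp_state P x0" and ?H = "qsp_H P x0"
  have tA: "\<And>s r t i j k. s < r \<Longrightarrow> r < t \<Longrightarrow> i \<ge> 1 \<Longrightarrow> j \<ge> 1 \<Longrightarrow> k \<ge> 1 \<Longrightarrow>
       P s t i j k = (\<Sum>\<^sub>\<infinity>(m,l)\<in>{1..}\<times>{1..}. P s r i j m * P r t m l k * qsp_state P x0 r l)"
    using A unfolding qsp_typeA_def by blast
  have stepA: "((\<lambda>(a,b). P m n i p a * P n l a b j * ?X n b) has_sum P m l i p j) ({1..}\<times>{1..})"
    if p: "p \<ge> 1" for p
  proof -
    have pr: "((\<lambda>(a,b). P m n i p a * ?X n b) has_sum 1*1) ({1..}\<times>{1..})"
      by (rule prod_has_sum) (use basic_P[OF B \<open>m<n\<close> \<open>i\<ge>1\<close> p] state_facts[OF B] in auto)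
    have sm: "(\<lambda>(a,b). P m n i p a * P n l a b j * ?X n b) summable_on ({1..}\<times>{1..})"
    proof (rule summable_on_comparison_test[where f="\<lambda>(a,b). P m n i p a * ?X n b"])
      show "(\<lambda>(a,b). P m n i p a * ?X n b) summable_on ({1..}\<times>{1..})"
        using pr by (auto simp: summable_on_def)
      fix x :: "nat \<times> nat" assume "x \<in> {1..}\<times>{1..}"
      then obtain a b where x: "x = (a,b)" "a \<ge> 1" "b \<ge> 1" by auto
      have h1: "0 \<le> P m n i p a" using basic_P[OF B \<open>m<n\<close> \<open>i\<ge>1\<close> p] x by auto
      have h2: "0 \<le> P n l a b j" "P n l a b j \<le> 1" using basic_P[OF B \<open>n<l\<close> x(2,3)] assms by auto
      have h3: "0 \<le> ?X n b" using state_facts(2)[OF B] x by auto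
      have "P m n i p a * P n l a b j * ?X n b = P n l a b j * (P m n i p a * ?X n b)" by simp
      also have "\<dots> \<le> P m n i p a * ?X n b" using h1 h2 h3 by (intro mult_left_le_one_le) auto
      finally show "(case x of (a,b) \<Rightarrow> P m n i p a * P n l a b j * ?X n b) \<le> (case x of (a,b) \<Rightarrow> P m n i p a * ?X n b)"
        using x by simp
      show "0 \<le> (case x of (a,b) \<Rightarrow> P m n i p a * P n l a b j * ?X n b)" using x h1 h2 h3 by simp
    qed
    have eq: "P m l i p j = (\<Sum>\<^sub>\<infinity>(a,b)\<in>{1..}\<times>{1..}. P m n i p a * P n l a b j * ?X n b)"
      using tA[of m n l i p j] assms p by simp
    show ?thesis unfolding eq by (rule has_sum_infsum[OF sm])
  qed
  have stepC: "((\<lambda>a. P m n i p a * ?H n l a j * ?X m p) has_sum P m l i p j * ?X m p) {1..}"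
    if p: "p \<ge> 1" for p
  proof -
    have "((\<lambda>a. infsum (\<lambda>b. P m n i p a * P n l a b j * ?X n b) {1..}) has_sum P m l i p j) {1..}"
      by (rule L2a[OF stepA[OF p]])
    moreover have "infsum (\<lambda>b. P m n i p a * P n l a b j * ?X n b) {1..} = P m n i p a * ?H n l a j"
      if "a \<ge> 1" for a
    proof -
      have "infsum (\<lambda>b. P m n i p a * (P n l a b j * ?X n b)) {1..} = P m n i p a * infsum (\<lambda>b. P n l a b j * ?X n b) {1..}"
        using H_has_sum[OF B \<open>n<l\<close> that \<open>j\<ge>1\<close>] by (intro infsum_cmult_right) (auto simp: summable_on_def)
      then show ?thesis by (simp add: qsp_H_def mult.assoc)
    qed
    ultimately have "((\<lambda>a. P m n i p a * ?H n l a j) has_sum P m l i p j) {1..}"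
      by (subst (asm) has_sum_cong[where g="\<lambda>a. P m n i p a * ?H n l a j"]) auto
    then show ?thesis by (rule has_sum_cmult_left)
  qed
  have stepD: "((\<lambda>p. P m l i p j * ?X m p) has_sum ?H m l i j) {1..}"
    using H_has_sum[OF B _ \<open>i\<ge>1\<close> \<open>j\<ge>1\<close>] assms by auto
  have stepE: "((\<lambda>(p,a). P m n i p a * ?H n l a j * ?X m p) has_sum ?H m l i j) ({1..}\<times>{1..})"
  proof (rule L1[OF _ _ stepD])
    fix p a :: nat assume "p \<in> {1..}" "a \<in> {1..}"
    then show "0 \<le> P m n i p a * ?H n l a j * ?X m p"
      using basic_P[OF B \<open>m<n\<close> \<open>i\<ge>1\<close>] H_nonneg[OF B \<open>n<l\<close> _ \<open>j\<ge>1\<close>] state_facts(2)[OF B] by auto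
  qed (use stepC in auto)
  have stepF: "((\<lambda>a. infsum (\<lambda>p. P m n i p a * ?H n l a j * ?X m p) {1..}) has_sum ?H m l i j) {1..}"
    by (rule L2b[OF stepE])
  have "infsum (\<lambda>p. P m n i p a * ?H n l a j * ?X m p) {1..} = ?H m n i a * ?H n l a j"
    if "a \<ge> 1" for a
  proof -
    have "infsum (\<lambda>p. P m n i p a * ?X m p * ?H n l a j) {1..} = infsum (\<lambda>p. P m n i p a * ?X m p) {1..} * ?H n l a j"
      using H_has_sum[OF B \<open>m<n\<close> \<open>i\<ge>1\<close> that] by (intro infsum_cmult_left) (auto simp: summable_on_def)
    then show ?thesis by (simp add: qsp_H_def mult_ac)
  qed
  then have "((\<lambda>a. ?H m n i a * ?H n l a j) has_sum ?H m l i j) {1..}"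
    using stepF by (subst (asm) has_sum_cong[where g="\<lambda>a. ?H m n i a * ?H n l a j"]) auto
  then show ?thesis by (simp add: infsumI)
qed

lemma Xpos:
  assumes B: "qsp_basic P x0" and "0 < r" "k \<ge> 1"
  shows "((\<lambda>(i,j). P 0 r i j k * x0 i * x0 j) has_sum qsp_state P x0 r k) ({1..}\<times>{1..})"
proof -
  have pr: "((\<lambda>(i,j). x0 i * x0 j) has_sum 1*1) ({1..}\<times>{1..})"
    by (rule prod_has_sum) (use basic_x0[OF B] in auto)
  have sm: "(\<lambda>(i,j). P 0 r i j k * x0 i * x0 j) summable_on ({1..}\<times>{1..})"
  proof (rule summable_on_comparison_test[where f="\<lambda>(i,j). x0 i * x0 j"])
    show "(\<lambda>(i,j). x0 i * x0 j) summable_on ({1..}\<times>{1..})" using pr by (auto simp: summable_on_def)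
    fix x :: "nat \<times> nat" assume "x \<in> {1..}\<times>{1..}"
    then obtain i j where x: "x = (i,j)" "i \<ge> 1" "j \<ge> 1" by auto
    have h1: "0 \<le> P 0 r i j k" "P 0 r i j k \<le> 1" using basic_P[OF B \<open>0<r\<close> x(2,3)] assms by auto
    have h2: "0 \<le> x0 i * x0 j" using basic_x0(2)[OF B] x by auto
    have "P 0 r i j k * x0 i * x0 j = P 0 r i j k * (x0 i * x0 j)" by simp
    also have "\<dots> \<le> x0 i * x0 j" using h1 h2 by (intro mult_left_le_one_le) auto
    finally show "(case x of (i,j) \<Rightarrow> P 0 r i j k * x0 i * x0 j) \<le> (case x of (i,j) \<Rightarrow> x0 i * x0 j)"
      using x by simp
    show "0 \<le> (case x of (i,j) \<Rightarrow> P 0 r i j k * x0 i * x0 j)" using x h1 h2 by (simp add: mult.assoc)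
  qed
  show ?thesis using has_sum_infsum[OF sm] \<open>0<r\<close> by (simp add: qsp_state_def)
qed

lemma rowprod:
  assumes B: "qsp_basic P x0" and "s < r" "i \<ge> 1"
  shows "((\<lambda>(a,b). P s r i a b * qsp_state P x0 s a) has_sum 1) ({1..}\<times>{1..})"
proof (rule L1[where g="qsp_state P x0 s"])
  show "(qsp_state P x0 s has_sum 1) {1..}" by (rule state_facts(1)[OF B])
  fix a b :: nat assume "a \<in> {1..}" "b \<in> {1..}"
  then show "0 \<le> P s r i a b * qsp_state P x0 s a"
    using basic_P[OF B \<open>s<r\<close> \<open>i\<ge>1\<close>] state_facts(2)[OF B] by auto
next
  fix a :: nat assume "a \<in> {1..}"
  then have "((\<lambda>b. P s r i a b * qsp_state P x0 s a) has_sum 1 * qsp_state P x0 s a) {1..}"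
    by (intro has_sum_cmult_left basic_P(1)[OF B \<open>s<r\<close> \<open>i\<ge>1\<close>]) auto
  then show "((\<lambda>b. P s r i a b * qsp_state P x0 s a) has_sum qsp_state P x0 s a) {1..}" by simp
qed

lemma B_sum:
  assumes TB: "qsp_typeB P x0" and "s < r" "r < t" "i \<ge> 1" "j \<ge> 1" "k \<ge> 1"
  shows "((\<lambda>((a,b),(g,h)). P s r i a b * P s r j g h * P r t b h k * qsp_state P x0 s a * qsp_state P x0 s g)
           has_sum P s t i j k) (({1..}\<times>{1..})\<times>({1..}\<times>{1..}))"
proof -
  have B: "qsp_basic P x0" using TB by (simp add: qsp_typeB_def)
  let ?X = "qsp_state P x0 s"
  have tB: "\<And>s r t i j k. s < r \<Longrightarrow> r < t \<Longrightarrow> i \<ge> 1 \<Longrightarrow> j \<ge> 1 \<Longrightarrow> k \<ge> 1 \<Longrightarrow>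
       P s t i j k = (\<Sum>\<^sub>\<infinity>((m,l),(g,h))\<in>({1..}\<times>{1..})\<times>({1..}\<times>{1..}).
          P s r i m l * P s r j g h * P r t l h k * qsp_state P x0 s m * qsp_state P x0 s g)"
    using TB unfolding qsp_typeB_def by blast
  have pr: "((\<lambda>(u,v). (case u of (a,b) \<Rightarrow> P s r i a b * ?X a) * (case v of (g,h) \<Rightarrow> P s r j g h * ?X g)) has_sum 1*1)
     (({1..}\<times>{1..})\<times>({1..}\<times>{1..}))"
    by (rule prod_has_sum) (use rowprod[OF B \<open>s<r\<close> \<open>i\<ge>1\<close>] rowprod[OF B \<open>s<r\<close> \<open>j\<ge>1\<close>]
        basic_P[OF B \<open>s<r\<close>] state_facts(2)[OF B] assms in auto)
  have sm: "(\<lambda>((a,b),(g,h)). P s r i a b * P s r j g h * P r t b h k * ?X a * ?X g) summable_on (({1..}\<times>{1..})\<times>({1..}\<times>{1..}))"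
  proof (rule summable_on_comparison_test[where f="\<lambda>((a,b),(g,h)). (P s r i a b * ?X a) * (P s r j g h * ?X g)"])
    show "(\<lambda>((a,b),(g,h)). (P s r i a b * ?X a) * (P s r j g h * ?X g)) summable_on (({1..}\<times>{1..})\<times>({1..}\<times>{1..}))"
      using hs_sm[OF pr] by (simp add: case_prod_unfold)
    fix x :: "(nat \<times> nat) \<times> (nat \<times> nat)" assume "x \<in> ({1..}\<times>{1..})\<times>({1..}\<times>{1..})"
    then obtain a b g h where x: "x = ((a,b),(g,h))" "a \<ge> 1" "b \<ge> 1" "g \<ge> 1" "h \<ge> 1" by auto
    have h1: "0 \<le> P s r i a b" "0 \<le> P s r j g h" using basic_P[OF B \<open>s<r\<close>] x assms by auto
    have h2: "0 \<le> P r t b h k" "P r t b h k \<le> 1" using basic_P[OF B \<open>r<t\<close> x(3,5)] assms by auto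
    have h3: "0 \<le> ?X a" "0 \<le> ?X g" using state_facts(2)[OF B] x by auto
    have h4: "0 \<le> (P s r i a b * ?X a) * (P s r j g h * ?X g)" using h1 h3 by simp
    have "P s r i a b * P s r j g h * P r t b h k * ?X a * ?X g = P r t b h k * ((P s r i a b * ?X a) * (P s r j g h * ?X g))"
      by (simp add: mult_ac)
    also have "\<dots> \<le> (P s r i a b * ?X a) * (P s r j g h * ?X g)" using h2 h4 by (intro mult_left_le_one_le) auto
    finally show "(\<lambda>((a,b),(g,h)). P s r i a b * P s r j g h * P r t b h k * ?X a * ?X g) x
       \<le> (\<lambda>((a,b),(g,h)). (P s r i a b * ?X a) * (P s r j g h * ?X g)) x"
      using x by simp
    show "0 \<le> (\<lambda>((a,b),(g,h)). P s r i a b * P s r j g h * P r t b h k * ?X a * ?X g) x"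
      using x h1 h2 h3 by simp
  qed
  have eq: "P s t i j k = (\<Sum>\<^sub>\<infinity>((a,b),(g,h))\<in>({1..}\<times>{1..})\<times>({1..}\<times>{1..}).
          P s r i a b * P s r j g h * P r t b h k * ?X a * ?X g)"
    using tB[of s r t i j k] assms by simp
  show ?thesis unfolding eq by (rule has_sum_infsum[OF sm])
qed

lemma XB:
  assumes TB: "qsp_typeB P x0" and "m < n" "k \<ge> 1"
  shows "((\<lambda>(p,g). P m n p g k * qsp_state P x0 m p * qsp_state P x0 m g) has_sum qsp_state P x0 n k) ({1..}\<times>{1..})"
proof (cases "m = 0")
  case True
  have B: "qsp_basic P x0" using TB by (simp add: qsp_typeB_def)
  show ?thesis using Xpos[OF B _ \<open>k\<ge>1\<close>, of n] True assms by (simp add: state_def0)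
next
  case False
  have B: "qsp_basic P x0" using TB by (simp add: qsp_typeB_def)
  let ?X = "qsp_state P x0"
  define f where "f = (\<lambda>(i::nat,j::nat) ((a::nat,b::nat),(g::nat,h::nat)). x0 i * x0 j * (P 0 m i a b * P 0 m j g h * P m n b h k * x0 a * x0 g))"
  have x0nn: "\<And>i. i \<ge> 1 \<Longrightarrow> 0 \<le> x0 i" by (rule basic_x0(2)[OF B])
  have Pnn: "\<And>s t i j k. s < t \<Longrightarrow> i \<ge> 1 \<Longrightarrow> j \<ge> 1 \<Longrightarrow> k \<ge> 1 \<Longrightarrow> 0 \<le> P s t i j k"
    using basic_P(2)[OF B] by blast
  have tot: "((\<lambda>(u,v). f u v) has_sum ?X n k) (({1..}\<times>{1..})\<times>(({1..}\<times>{1..})\<times>({1..}\<times>{1..})))"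
  proof (rule L1[where g="\<lambda>(i,j). x0 i * x0 j * P 0 n i j k"])
    fix u :: "nat \<times> nat" and v :: "(nat \<times> nat) \<times> (nat \<times> nat)"
    assume "u \<in> {1..}\<times>{1..}" "v \<in> ({1..}\<times>{1..})\<times>({1..}\<times>{1..})"
    then show "0 \<le> f u v" using x0nn Pnn[of 0 m] Pnn[of m n] False assms
      by (auto simp: f_def case_prod_unfold intro!: mult_nonneg_nonneg)
  next
    fix u :: "nat \<times> nat" assume "u \<in> {1..}\<times>{1..}"
    then obtain i j where u: "u = (i,j)" "i \<ge> 1" "j \<ge> 1" by auto
    have "((\<lambda>((a,b),(g,h)). P 0 m i a b * P 0 m j g h * P m n b h k * ?X 0 a * ?X 0 g) has_sum P 0 n i j k)
        (({1..}\<times>{1..})\<times>({1..}\<times>{1..}))"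
      by (rule B_sum[OF TB]) (use False assms u in auto)
    then have "((\<lambda>x. x0 i * x0 j * (\<lambda>((a,b),(g,h)). P 0 m i a b * P 0 m j g h * P m n b h k * x0 a * x0 g) x) has_sum x0 i * x0 j * P 0 n i j k)
        (({1..}\<times>{1..})\<times>({1..}\<times>{1..}))"
      by (intro has_sum_cmult_right) (simp add: state_def0)
    then show "(f u has_sum (\<lambda>(i,j). x0 i * x0 j * P 0 n i j k) u) (({1..}\<times>{1..})\<times>({1..}\<times>{1..}))"
      using u by (simp add: f_def case_prod_unfold)
  next
    have "((\<lambda>(i,j). P 0 n i j k * x0 i * x0 j) has_sum ?X n k) ({1..}\<times>{1..})"
      by (rule Xpos[OF B _ \<open>k\<ge>1\<close>]) (use assms in auto)
    then show "((\<lambda>(i,j). x0 i * x0 j * P 0 n i j k) has_sum ?X n k) ({1..}\<times>{1..})"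
      by (simp add: case_prod_unfold mult_ac)
  qed
  define \<phi> where "\<phi> = (\<lambda>(((b::nat),(h::nat)),(((i::nat),(a::nat)),((j::nat),(g::nat)))). ((i,j),((a,b),(g,h))))"
  define \<psi> where "\<psi> = (\<lambda>(((i::nat),(j::nat)),(((a::nat),(b::nat)),((g::nat),(h::nat)))). ((b,h),((i,a),(j,g))))"
  let ?D = "({1..}\<times>{1..})\<times>(({1..}\<times>{1..})\<times>({1..}\<times>{1..})) :: ((nat\<times>nat)\<times>((nat\<times>nat)\<times>(nat\<times>nat))) set"
  have bij: "bij_betw \<phi> ?D ?D"
    by (rule bij_betwI[where g=\<psi>]) (auto simp: \<phi>_def \<psi>_def)
  define F2 where "F2 = (\<lambda>(b::nat,h::nat) ((i::nat,a::nat),(j::nat,g::nat)).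
      P m n b h k * ((P 0 m i a b * x0 i * x0 a) * (P 0 m j g h * x0 j * x0 g)))"
  have "((\<lambda>x. (\<lambda>(u,v). f u v) (\<phi> x)) has_sum ?X n k) ?D"
    using has_sum_reindex_bij_betw[OF bij] tot by blast
  moreover have "(\<lambda>(u,v). f u v) (\<phi> x) = (\<lambda>(u,v). F2 u v) x" for x
    by (cases x) (auto simp: f_def F2_def \<phi>_def case_prod_unfold mult_ac)
  ultimately have tot2: "((\<lambda>(u,v). F2 u v) has_sum ?X n k) ?D" by simp
  have inner: "infsum (F2 (b,h)) (({1..}\<times>{1..})\<times>({1..}\<times>{1..})) = P m n b h k * ?X m b * ?X m h"
    if "b \<ge> 1" "h \<ge> 1" for b h
  proof -
    have "((\<lambda>(u,v). (\<lambda>(i,a). P 0 m i a b * x0 i * x0 a) u * (\<lambda>(j,g). P 0 m j g h * x0 j * x0 g) v)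
        has_sum ?X m b * ?X m h) (({1..}\<times>{1..})\<times>({1..}\<times>{1..}))"
      by (rule prod_has_sum) (use Xpos[OF B] False that x0nn Pnn[of 0 m] in \<open>auto simp: case_prod_unfold\<close>)
    then have "((\<lambda>x. P m n b h k * (\<lambda>(u,v). (\<lambda>(i,a). P 0 m i a b * x0 i * x0 a) u * (\<lambda>(j,g). P 0 m j g h * x0 j * x0 g) v) x)
        has_sum P m n b h k * (?X m b * ?X m h)) (({1..}\<times>{1..})\<times>({1..}\<times>{1..}))"
      by (rule has_sum_cmult_right)
    then have "(F2 (b,h) has_sum P m n b h k * (?X m b * ?X m h)) (({1..}\<times>{1..})\<times>({1..}\<times>{1..}))"
      by (simp add: F2_def case_prod_unfold)
    then show ?thesis by (simp add: infsumI mult.assoc)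
  qed
  have "((\<lambda>u. infsum (F2 u) (({1..}\<times>{1..})\<times>({1..}\<times>{1..}))) has_sum ?X n k) ({1..}\<times>{1..})"
    by (rule L2a[OF tot2])
  then show ?thesis
    by (subst (asm) has_sum_cong[where g="\<lambda>(p,g). P m n p g k * ?X m p * ?X m g"]) (use inner in auto)
qed

lemma markovB:
  assumes TB: "qsp_typeB P x0" and "m < n" "n < l" "i \<ge> 1" "j \<ge> 1"
  shows "qsp_H P x0 m l i j = (\<Sum>\<^sub>\<infinity>k\<in>{1..}. qsp_H P x0 m n i k * qsp_H P x0 n l k j)"
proof -
  have B: "qsp_basic P x0" using TB by (simp add: qsp_typeB_def)
  let ?X = "qsp_state P x0" and ?H = "qsp_H P x0"
  have Xnn: "\<And>r i. i \<ge> 1 \<Longrightarrow> 0 \<le> ?X r i" by (rule state_facts(2)[OF B])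
  have Pnn: "\<And>s t i j k. s < t \<Longrightarrow> i \<ge> 1 \<Longrightarrow> j \<ge> 1 \<Longrightarrow> k \<ge> 1 \<Longrightarrow> 0 \<le> P s t i j k"
    using basic_P(2)[OF B] by blast
  define f where "f = (\<lambda>(p::nat) ((a::nat,b::nat),(g::nat,h::nat)). ?X m p * (P m n i a b * P m n p g h * P n l b h j * ?X m a * ?X m g))"
  have tot: "((\<lambda>(u,v). f u v) has_sum ?H m l i j) ({1..}\<times>(({1..}\<times>{1..})\<times>({1..}\<times>{1..})))"
  proof (rule L1[where g="\<lambda>p. ?X m p * P m l i p j"])
    fix u :: nat and v :: "(nat \<times> nat) \<times> (nat \<times> nat)"
    assume "u \<in> {1..}" "v \<in> ({1..}\<times>{1..})\<times>({1..}\<times>{1..})"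
    then show "0 \<le> f u v" using Xnn Pnn[of m n] Pnn[of n l] assms
      by (auto simp: f_def case_prod_unfold intro!: mult_nonneg_nonneg)
  next
    fix p :: nat assume "p \<in> {1..}"
    then have "((\<lambda>((a,b),(g,h)). P m n i a b * P m n p g h * P n l b h j * ?X m a * ?X m g) has_sum P m l i p j)
        (({1..}\<times>{1..})\<times>({1..}\<times>{1..}))"
      by (intro B_sum[OF TB]) (use assms in auto)
    then have "((\<lambda>x. ?X m p * (\<lambda>((a,b),(g,h)). P m n i a b * P m n p g h * P n l b h j * ?X m a * ?X m g) x) has_sum ?X m p * P m l i p j)
        (({1..}\<times>{1..})\<times>({1..}\<times>{1..}))"
      by (rule has_sum_cmult_right)
    then show "(f p has_sum ?X m p * P m l i p j) (({1..}\<times>{1..})\<times>({1..}\<times>{1..}))"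
      by (simp add: f_def case_prod_unfold)
  next
    have "((\<lambda>p. P m l i p j * ?X m p) has_sum ?H m l i j) {1..}"
      by (rule H_has_sum[OF B]) (use assms in auto)
    then show "((\<lambda>p. ?X m p * P m l i p j) has_sum ?H m l i j) {1..}"
      by (simp add: mult_ac)
  qed
  define \<phi> where "\<phi> = (\<lambda>(((b::nat),(h::nat)),((a::nat),((p::nat),(g::nat)))). (p,((a,b),(g,h))))"
  define \<psi> where "\<psi> = (\<lambda>((p::nat),(((a::nat),(b::nat)),((g::nat),(h::nat)))). ((b,h),(a,(p,g))))"
  let ?D1 = "({1..}\<times>{1..})\<times>({1..}\<times>({1..}\<times>{1..})) :: ((nat\<times>nat)\<times>(nat\<times>(nat\<times>nat))) set"
  let ?D2 = "{1..}\<times>(({1..}\<times>{1..})\<times>({1..}\<times>{1..})) :: (nat\<times>((nat\<times>nat)\<times>(nat\<times>nat))) set"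
  have bij: "bij_betw \<phi> ?D1 ?D2"
    by (rule bij_betwI[where g=\<psi>]) (auto simp: \<phi>_def \<psi>_def)
  define F3 where "F3 = (\<lambda>(b::nat,h::nat) (a::nat,(p::nat,g::nat)).
      P n l b h j * ((P m n i a b * ?X m a) * (P m n p g h * ?X m p * ?X m g)))"
  have "((\<lambda>x. (\<lambda>(u,v). f u v) (\<phi> x)) has_sum ?H m l i j) ?D1"
    using has_sum_reindex_bij_betw[OF bij] tot by blast
  moreover have "(\<lambda>(u,v). f u v) (\<phi> x) = (\<lambda>(u,v). F3 u v) x" for x
    by (cases x) (auto simp: f_def F3_def \<phi>_def case_prod_unfold mult_ac)
  ultimately have tot2: "((\<lambda>(u,v). F3 u v) has_sum ?H m l i j) ?D1" by simp
  have inner: "infsum (F3 (b,h)) ({1..}\<times>({1..}\<times>{1..})) = ?H m n i b * (P n l b h j * ?X n h)"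
    if "b \<ge> 1" "h \<ge> 1" for b h
  proof -
    have "((\<lambda>(u,v). (\<lambda>a. P m n i a b * ?X m a) u * (\<lambda>(p,g). P m n p g h * ?X m p * ?X m g) v)
        has_sum ?H m n i b * ?X n h) ({1..}\<times>({1..}\<times>{1..}))"
      by (rule prod_has_sum) (use H_has_sum[OF B \<open>m<n\<close> \<open>i\<ge>1\<close> that(1)] XB[OF TB \<open>m<n\<close> that(2)]
          that Xnn Pnn[of m n] assms in \<open>auto simp: case_prod_unfold\<close>)
    then have "((\<lambda>x. P n l b h j * (\<lambda>(u,v). (\<lambda>a. P m n i a b * ?X m a) u * (\<lambda>(p,g). P m n p g h * ?X m p * ?X m g) v) x)
        has_sum P n l b h j * (?H m n i b * ?X n h)) ({1..}\<times>({1..}\<times>{1..}))"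
      by (rule has_sum_cmult_right)
    then have "(F3 (b,h) has_sum P n l b h j * (?H m n i b * ?X n h)) ({1..}\<times>({1..}\<times>{1..}))"
      by (simp add: F3_def case_prod_unfold)
    then show ?thesis by (simp add: infsumI mult_ac)
  qed
  have "((\<lambda>u. infsum (F3 u) ({1..}\<times>({1..}\<times>{1..}))) has_sum ?H m l i j) ({1..}\<times>{1..})"
    by (rule L2a[OF tot2])
  then have tot3: "((\<lambda>(b,h). ?H m n i b * (P n l b h j * ?X n h)) has_sum ?H m l i j) ({1..}\<times>{1..})"
    by (subst (asm) has_sum_cong[where g="\<lambda>(b,h). ?H m n i b * (P n l b h j * ?X n h)"]) (use inner in auto)
  have "((\<lambda>b. infsum (\<lambda>h. ?H m n i b * (P n l b h j * ?X n h)) {1..}) has_sum ?H m l i j) {1..}"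
    by (rule L2a[OF tot3])
  moreover have "infsum (\<lambda>h. ?H m n i b * (P n l b h j * ?X n h)) {1..} = ?H m n i b * ?H n l b j"
    if "b \<ge> 1" for b
    using H_has_sum[OF B \<open>n<l\<close> that \<open>j\<ge>1\<close>]
    by (subst infsum_cmult_right) (auto simp: summable_on_def qsp_H_def)
  ultimately have "((\<lambda>b. ?H m n i b * ?H n l b j) has_sum ?H m l i j) {1..}"
    by (subst (asm) has_sum_cong[where g="\<lambda>b. ?H m n i b * ?H n l b j"]) auto
  then show ?thesis by (simp add: infsumI)
qed

theorem lemma2p3:
  fixes P :: "nat \<Rightarrow> nat \<Rightarrow> nat \<Rightarrow> nat \<Rightarrow> nat \<Rightarrow> real" and x0 :: "nat \<Rightarrow> real"
  assumes "qsp_typeA P x0 \<or> qsp_typeB P x0"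
  shows "(\<forall>m n. m < n \<longrightarrow> stochastic_matrix (qsp_H P x0 m n))
    \<and> (\<forall>m n l i j. m < n \<and> n < l \<and> i \<ge> 1 \<and> j \<ge> 1 \<longrightarrow>
         qsp_H P x0 m l i j = (\<Sum>\<^sub>\<infinity>k\<in>{1..}. qsp_H P x0 m n i k * qsp_H P x0 n l k j))"
proof -
  have B: "qsp_basic P x0" using assms by (auto simp: qsp_typeA_def qsp_typeB_def)
  have "\<forall>m n. m < n \<longrightarrow> stochastic_matrix (qsp_H P x0 m n)"
    using stoch[OF B] by blast
  moreover have "qsp_H P x0 m l i j = (\<Sum>\<^sub>\<infinity>k\<in>{1..}. qsp_H P x0 m n i k * qsp_H P x0 n l k j)"
    if "m < n" "n < l" "i \<ge> 1" "j \<ge> 1" for m n l i j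
  proof (cases "qsp_typeA P x0")
    case True then show ?thesis by (rule markovA) (use that in auto)
  next
    case False then have "qsp_typeB P x0" using assms by blast
    then show ?thesis by (rule markovB) (use that in auto)
  qed
  ultimately show ?thesis by blast
qed

end
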